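(* Let $U\subset(0,1)^d$ be open, $A,B>0$, $C\ge0$, $r$ a positive integer or $+\infty$, and $l\ge1$ an integer. If $f_1,\ldots,f_l:U\to\mathbb{R}$ are $(A,B,C)$-mild up to order $r$, then the product $f_1\cdots f_l$ is $(lA,B^l,C)$-mild up to order $r$. Likewise, if $f_1,\ldots,f_l$ are weakly $(A,B,C)$-mild up to order $r$, then $f_1\cdots f_l$ is weakly $(lA,B^l,C)$-mild up to order $r$.
   Context: For $U$ open, $g:U\to\mathbb{R}$ is $(A,B,C)$-mild up to order $r$ if it is $C^r$ and $|g^{(\nu)}(x)|\le B^{C+1}A^{|\nu|}|\nu|!^{C+1}$ for all $x\in U$ and $\nu\in\mathbb{N}^d$ with $|\nu|\le r$; it is weakly $(A,B,C)$-mild up to order $r$ (for $U\subset(0,1)^d$) if it is $C^r$ and $|g^{(\nu)}(x)|\le B^{C+1}A^{|\nu|}|\nu|!^{C+1}/x^\nu$ for the same $x,\nu$. Here $g^{(\nu)}=\partial^{|\nu|}g/\partial x_1^{\nu_1}\cdots\partial x_d^{\nu_d}$, $|\nu|=\sum\nu_i$, $x^\nu=\prod x_i^{\nu_i}$; order $+\infty$ means $C^\infty$ and all $\nu$. *)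

theory Defs
  imports "HOL-Analysis.Analysis" "HOL-Library.Extended_Nat"
begin

text \<open>Points of R^d are modelled as real^'n (d = CARD('n)).
  Partial derivative in direction of the i-th coordinate.\<close>
definition pd :: "'n::finite \<Rightarrow> (real^'n \<Rightarrow> real) \<Rightarrow> real^'n \<Rightarrow> real" where
  "pd i h x = deriv (\<lambda>t. h (x + t *\<^sub>R axis i 1)) 0"

text \<open>Iterated partial derivatives along a list of coordinate indices
  (the multi-index nu is given by the multiplicities of indices in the list).\<close>
fun pds :: "'n::finite list \<Rightarrow> (real^'n \<Rightarrow> real) \<Rightarrow> real^'n \<Rightarrow> real" where
  "pds [] h = h"
| "pds (i # is) h = pd i (pds is h)"

definition Cr_on :: "enat \<Rightarrow> (real^'n::finite) set \<Rightarrow> (real^'n \<Rightarrow> real) \<Rightarrow> bool" where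
  "Cr_on r U g \<longleftrightarrow>
     (\<forall>is. enat (length is) \<le> r \<longrightarrow>
        continuous_on U (pds is g) \<and>
        (enat (length is) < r \<longrightarrow>
           (\<forall>i. \<forall>x\<in>U. (\<lambda>t. pds is g (x + t *\<^sub>R axis i 1)) differentiable (at 0))))"

definition mild :: "real \<Rightarrow> real \<Rightarrow> real \<Rightarrow> enat \<Rightarrow> (real^'n::finite) set \<Rightarrow> (real^'n \<Rightarrow> real) \<Rightarrow> bool" where
  "mild A B C r U g \<longleftrightarrow> Cr_on r U g \<and>
     (\<forall>x\<in>U. \<forall>is. enat (length is) \<le> r \<longrightarrow>
        \<bar>pds is g x\<bar> \<le> B powr (C + 1) * A ^ length is * (fact (length is)) powr (C + 1))"

definition weakly_mild :: "real \<Rightarrow> real \<Rightarrow> real \<Rightarrow> enat \<Rightarrow> (real^'n::finite) set \<Rightarrow> (real^'n \<Rightarrow> real) \<Rightarrow> bool" where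
  "weakly_mild A B C r U g \<longleftrightarrow> Cr_on r U g \<and>
     (\<forall>x\<in>U. \<forall>is. enat (length is) \<le> r \<longrightarrow>
        \<bar>pds is g x\<bar> \<le> B powr (C + 1) * A ^ length is * (fact (length is)) powr (C + 1)
                        / (\<Prod>i\<in>UNIV. (x $ i) ^ count_list is i))"

end

theory Submission imports Defs begin

fun splits :: "'a list \<Rightarrow> ('a list \<times> 'a list) list" where
  "splits [] = [([], [])]"
| "splits (i # is) = map (\<lambda>(a, b). (i # a, b)) (splits is) @ map (\<lambda>(a, b). (a, i # b)) (splits is)"

lemma splits_len: "p \<in> set (splits is) \<Longrightarrow> length (fst p) + length (snd p) = length is"
  by (induction "is" arbitrary: p) auto

lemma splits_count: "p \<in> set (splits is) \<Longrightarrow> count_list (fst p) i + count_list (snd p) i = count_list is i"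
  by (induction "is" arbitrary: p) auto

lemma splits_sum: "(\<Sum>p\<leftarrow>splits is. (m::real) ^ length (fst p)) = (m + 1) ^ length is"
proof (induction "is")
  case Nil
  then show ?case by simp
next
  case (Cons i "is")
  have "(\<Sum>p\<leftarrow>splits (i # is). m ^ length (fst p)) =
     (\<Sum>p\<leftarrow>splits is. m * m ^ length (fst p)) + (\<Sum>p\<leftarrow>splits is. m ^ length (fst p))"
    by (simp add: o_def case_prod_beta)
  also have "\<dots> = (m + 1) * (\<Sum>p\<leftarrow>splits is. m ^ length (fst p))"
    by (simp add: sum_list_const_mult algebra_simps)
  finally show ?case using Cons by simp
qed

lemma DERIV_sum_list:
  "(\<And>p. p \<in> set ps \<Longrightarrow> DERIV (h p) x :> h' p) \<Longrightarrow> DERIV (\<lambda>t. \<Sum>p\<leftarrow>ps. h p t) x :> (\<Sum>p\<leftarrow>ps. h' p)"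
  by (induction ps) (auto intro!: DERIV_add)

lemma continuous_on_sum_list':
  fixes h :: "'p \<Rightarrow> 'a::topological_space \<Rightarrow> real"
  shows "(\<And>p. p \<in> set ps \<Longrightarrow> continuous_on U (h p)) \<Longrightarrow> continuous_on U (\<lambda>x. \<Sum>p\<leftarrow>ps. h p x)"
  proof (induction ps)
  case (Cons a ps)
  then show ?case using continuous_on_add[of U "h a" "\<lambda>x. \<Sum>p\<leftarrow>ps. h p x"] by simp
qed simp

lemma ev_line:
  fixes x :: "real^'n::finite"
  assumes "open U" "x \<in> U"
  shows "eventually (\<lambda>t. x + t *\<^sub>R v \<in> U) (nhds (0::real))"
proof -
  have "filterlim (\<lambda>t::real. x + t *\<^sub>R v) (nhds (x + 0 *\<^sub>R v)) (nhds 0)"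
    by (intro tendsto_intros) (simp add: filterlim_ident)
  then have "filterlim (\<lambda>t::real. x + t *\<^sub>R v) (nhds x) (nhds 0)" by simp
  moreover have "eventually (\<lambda>y. y \<in> U) (nhds x)"
    using assms eventually_nhds_in_open by blast
  ultimately show ?thesis unfolding filterlim_iff by blast
qed

lemma step_DERIV:
  fixes H :: "real^'n::finite \<Rightarrow> real"
  assumes "open U" "x \<in> U"
    and eq: "\<forall>y\<in>U. H y = (\<Sum>p\<leftarrow>ps. P p y * Q p y)"
    and dP: "\<And>p. p \<in> set ps \<Longrightarrow> (\<lambda>t. P p (x + t *\<^sub>R axis i 1)) differentiable (at 0)"
    and dQ: "\<And>p. p \<in> set ps \<Longrightarrow> (\<lambda>t. Q p (x + t *\<^sub>R axis i 1)) differentiable (at 0)"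
  shows "DERIV (\<lambda>t. H (x + t *\<^sub>R axis i 1)) 0 :>
     (\<Sum>p\<leftarrow>ps. pd i (P p) x * Q p x + P p x * pd i (Q p) x)"
proof -
  have D: "DERIV (\<lambda>t. \<Sum>p\<leftarrow>ps. P p (x + t *\<^sub>R axis i 1) * Q p (x + t *\<^sub>R axis i 1)) 0 :>
     (\<Sum>p\<leftarrow>ps. pd i (P p) x * Q p x + P p x * pd i (Q p) x)"
  proof (rule DERIV_sum_list)
    fix p assume p: "p \<in> set ps"
    have a: "DERIV (\<lambda>t. P p (x + t *\<^sub>R axis i 1)) 0 :> pd i (P p) x"
      using dP[OF p] unfolding pd_def by (simp add: DERIV_deriv_iff_real_differentiable)
    have b: "DERIV (\<lambda>t. Q p (x + t *\<^sub>R axis i 1)) 0 :> pd i (Q p) x"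
      using dQ[OF p] unfolding pd_def by (simp add: DERIV_deriv_iff_real_differentiable)
    from DERIV_mult[OF a b]
    show "DERIV (\<lambda>t. P p (x + t *\<^sub>R axis i 1) * Q p (x + t *\<^sub>R axis i 1)) 0 :>
       pd i (P p) x * Q p x + P p x * pd i (Q p) x"
      by (simp add: algebra_simps)
  qed
  have ev: "eventually (\<lambda>t. H (x + t *\<^sub>R axis i 1) =
      (\<Sum>p\<leftarrow>ps. P p (x + t *\<^sub>R axis i 1) * Q p (x + t *\<^sub>R axis i 1))) (nhds 0)"
    using ev_line[OF assms(1,2), of "axis i 1"] eq by (auto elim!: eventually_mono)
  show ?thesis using D DERIV_cong_ev[OF refl ev refl] by simp
qed

lemma leibniz:
  fixes F G :: "real^'n::finite \<Rightarrow> real"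
  assumes "open U"
    and dF: "\<And>js i y. length js < length is \<Longrightarrow> y \<in> U \<Longrightarrow> (\<lambda>t. pds js F (y + t *\<^sub>R axis i 1)) differentiable (at 0)"
    and dG: "\<And>js i y. length js < length is \<Longrightarrow> y \<in> U \<Longrightarrow> (\<lambda>t. pds js G (y + t *\<^sub>R axis i 1)) differentiable (at 0)"
  shows "\<forall>x\<in>U. pds is (\<lambda>x. F x * G x) x = (\<Sum>p\<leftarrow>splits is. pds (fst p) F x * pds (snd p) G x)"
  using dF dG
proof (induction "is")
  case Nil
  then show ?case by simp
next
  case (Cons i "is")
  have IH: "\<forall>y\<in>U. pds is (\<lambda>x. F x * G x) y = (\<Sum>p\<leftarrow>splits is. pds (fst p) F y * pds (snd p) G y)"
    using Cons.IH Cons.prems by simp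
  show ?case
  proof
    fix x assume x: "x \<in> U"
    have D: "DERIV (\<lambda>t. pds is (\<lambda>x. F x * G x) (x + t *\<^sub>R axis i 1)) 0 :>
      (\<Sum>p\<leftarrow>splits is. pd i (pds (fst p) F) x * pds (snd p) G x + pds (fst p) F x * pd i (pds (snd p) G) x)"
    proof (rule step_DERIV[OF assms(1) x IH])
      fix p assume p: "p \<in> set (splits is)"
      then have l: "length (fst p) < length (i # is)" "length (snd p) < length (i # is)"
        using splits_len[OF p] by auto
      show "(\<lambda>t. pds (fst p) F (x + t *\<^sub>R axis i 1)) differentiable (at 0)"
        using Cons.prems(1)[OF l(1) x] .
      show "(\<lambda>t. pds (snd p) G (x + t *\<^sub>R axis i 1)) differentiable (at 0)"
        using Cons.prems(2)[OF l(2) x] .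
    qed
    have "pds (i # is) (\<lambda>x. F x * G x) x =
      (\<Sum>p\<leftarrow>splits is. pd i (pds (fst p) F) x * pds (snd p) G x + pds (fst p) F x * pd i (pds (snd p) G) x)"
      using DERIV_imp_deriv[OF D] by (simp add: pd_def)
    also have "\<dots> = (\<Sum>p\<leftarrow>splits (i # is). pds (fst p) F x * pds (snd p) G x)"
      by (simp add: o_def case_prod_beta sum_list_addf)
    finally show "pds (i # is) (\<lambda>x. F x * G x) x = (\<Sum>p\<leftarrow>splits (i # is). pds (fst p) F x * pds (snd p) G x)" .
  qed
qed

lemma Cr_mult:
  fixes F G :: "real^'n::finite \<Rightarrow> real"
  assumes U: "open U" and F: "Cr_on r U F" and G: "Cr_on r U G"
  shows "Cr_on r U (\<lambda>x. F x * G x)"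
  unfolding Cr_on_def
proof (intro allI impI)
  fix "is" :: "'n list" assume len: "enat (length is) \<le> r"
  have dF: "\<And>js i y. length js < length is \<Longrightarrow> y \<in> U \<Longrightarrow> (\<lambda>t. pds js F (y + t *\<^sub>R axis i 1)) differentiable (at 0)"
  proof -
    fix js :: "'n list" and i y assume a: "length js < length is" "y \<in> U"
    have "enat (length js) < r" using a(1) len by (meson enat_ord_simps(2) order_less_le_trans)
    then show "(\<lambda>t. pds js F (y + t *\<^sub>R axis i 1)) differentiable (at 0)"
      using F a(2) unfolding Cr_on_def by (simp add: less_imp_le)
  qed
  have dG: "\<And>js i y. length js < length is \<Longrightarrow> y \<in> U \<Longrightarrow> (\<lambda>t. pds js G (y + t *\<^sub>R axis i 1)) differentiable (at 0)"
  proof -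
    fix js :: "'n list" and i y assume a: "length js < length is" "y \<in> U"
    have "enat (length js) < r" using a(1) len by (meson enat_ord_simps(2) order_less_le_trans)
    then show "(\<lambda>t. pds js G (y + t *\<^sub>R axis i 1)) differentiable (at 0)"
      using G a(2) unfolding Cr_on_def by (simp add: less_imp_le)
  qed
  note L = leibniz[OF U dF dG]
  have cF: "\<And>js. length js \<le> length is \<Longrightarrow> continuous_on U (pds js F)"
  proof -
    fix js :: "'n list" assume a: "length js \<le> length is"
    have "enat (length js) \<le> r" using a len by (meson enat_ord_simps(1) order_trans)
    then show "continuous_on U (pds js F)" using F unfolding Cr_on_def by blast
  qed
  have cG: "\<And>js. length js \<le> length is \<Longrightarrow> continuous_on U (pds js G)"
  proof -
    fix js :: "'n list" assume a: "length js \<le> length is"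
    have "enat (length js) \<le> r" using a len by (meson enat_ord_simps(1) order_trans)
    then show "continuous_on U (pds js G)" using G unfolding Cr_on_def by blast
  qed
  have "continuous_on U (\<lambda>x. \<Sum>p\<leftarrow>splits is. pds (fst p) F x * pds (snd p) G x)"
  proof (rule continuous_on_sum_list')
    fix p assume p: "p \<in> set (splits is)"
    show "continuous_on U (\<lambda>x. pds (fst p) F x * pds (snd p) G x)"
      using splits_len[OF p] by (intro continuous_on_mult cF cG) auto
  qed
  then have cont: "continuous_on U (pds is (\<lambda>x. F x * G x))"
    using continuous_on_cong[OF refl, of U "pds is (\<lambda>x. F x * G x)"] L by auto
  have "enat (length is) < r \<longrightarrow> (\<forall>i. \<forall>x\<in>U. (\<lambda>t. pds is (\<lambda>x. F x * G x) (x + t *\<^sub>R axis i 1)) differentiable (at 0))"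
  proof (intro allI ballI impI)
    assume lt: "enat (length is) < r"
    fix i x assume x: "x \<in> U"
    have dF': "\<And>js i y. length js \<le> length is \<Longrightarrow> y \<in> U \<Longrightarrow> (\<lambda>t. pds js F (y + t *\<^sub>R axis i 1)) differentiable (at 0)"
    proof -
      fix js :: "'n list" and i y assume a: "length js \<le> length is" "y \<in> U"
      have "enat (length js) < r" using a(1) lt by (meson enat_ord_simps(1) order_le_less_trans)
      then show "(\<lambda>t. pds js F (y + t *\<^sub>R axis i 1)) differentiable (at 0)"
        using F a(2) unfolding Cr_on_def by (simp add: less_imp_le)
    qed
    have dG': "\<And>js i y. length js \<le> length is \<Longrightarrow> y \<in> U \<Longrightarrow> (\<lambda>t. pds js G (y + t *\<^sub>R axis i 1)) differentiable (at 0)"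
    proof -
      fix js :: "'n list" and i y assume a: "length js \<le> length is" "y \<in> U"
      have "enat (length js) < r" using a(1) lt by (meson enat_ord_simps(1) order_le_less_trans)
      then show "(\<lambda>t. pds js G (y + t *\<^sub>R axis i 1)) differentiable (at 0)"
        using G a(2) unfolding Cr_on_def by (simp add: less_imp_le)
    qed
    have D: "DERIV (\<lambda>t. pds is (\<lambda>x. F x * G x) (x + t *\<^sub>R axis i 1)) 0 :>
      (\<Sum>p\<leftarrow>splits is. pd i (pds (fst p) F) x * pds (snd p) G x + pds (fst p) F x * pd i (pds (snd p) G) x)"
    proof (rule step_DERIV[OF U x L])
      fix p assume p: "p \<in> set (splits is)"
      have l: "length (fst p) \<le> length is" "length (snd p) \<le> length is"
        using splits_len[OF p] by auto
      show "(\<lambda>t. pds (fst p) F (x + t *\<^sub>R axis i 1)) differentiable (at 0)" by (rule dF'[OF l(1) x])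
      show "(\<lambda>t. pds (snd p) G (x + t *\<^sub>R axis i 1)) differentiable (at 0)" by (rule dG'[OF l(2) x])
    qed
    show "(\<lambda>t. pds is (\<lambda>x. F x * G x) (x + t *\<^sub>R axis i 1)) differentiable (at 0)"
      by (subst DERIV_deriv_iff_real_differentiable[symmetric]) (simp add: DERIV_imp_deriv[OF D] D)
  qed
  with cont show "continuous_on U (pds is (\<lambda>x. F x * G x)) \<and> (enat (length is) < r \<longrightarrow> (\<forall>i. \<forall>x\<in>U. (\<lambda>t. pds is (\<lambda>x. F x * G x) (x + t *\<^sub>R axis i 1)) differentiable (at 0)))" by blast
qed

lemma fact_mult_le: "(fact a * fact b :: real) \<le> fact (a + b)"
proof -
  have "fact a * fact b * ((a + b) choose a) = (fact (a + b) :: nat)"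
    using binomial_fact_lemma[of a "a + b"] by simp
  moreover have "((a + b) choose a) \<ge> 1" using zero_less_binomial[of a "a + b"] by linarith
  ultimately have "fact a * fact b \<le> (fact (a + b) :: nat)"
    by (metis mult.right_neutral mult_le_mono2)
  then have "real (fact a * fact b) \<le> real (fact (a + b))" by linarith
  then show ?thesis by (simp add: of_nat_fact)
qed

lemma bound_step:
  fixes u v w :: "'a list \<Rightarrow> real" and P Q m A C V :: real
  assumes eq: "V = (\<Sum>p\<leftarrow>splits is. u (fst p) * v (snd p))"
    and bu: "\<And>a. length a \<le> length is \<Longrightarrow> \<bar>u a\<bar> \<le> P * (m * A) ^ length a * fact (length a) powr (C + 1) * w a"
    and bv: "\<And>b. length b \<le> length is \<Longrightarrow> \<bar>v b\<bar> \<le> Q * A ^ length b * fact (length b) powr (C + 1) * w b"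
    and wm: "\<And>p. p \<in> set (splits is) \<Longrightarrow> w (fst p) * w (snd p) = w is"
    and w0: "\<And>a. w a \<ge> 0" and P: "P \<ge> 0" and Q: "Q \<ge> 0" and m: "m \<ge> 0" and A: "A \<ge> 0" and C: "C \<ge> 0"
  shows "\<bar>V\<bar> \<le> P * Q * ((m + 1) * A) ^ length is * fact (length is) powr (C + 1) * w is"
proof -
  define K where "K = P * Q * A ^ length is * fact (length is) powr (C + 1) * w is"
  have trm: "\<bar>u (fst p) * v (snd p)\<bar> \<le> m ^ length (fst p) * K" if p: "p \<in> set (splits is)" for p
  proof -
    define a where "a = fst p"
    define b where "b = snd p"
    have n: "length a + length b = length is" using splits_len[OF p] by (simp add: a_def b_def)
    have ba: "\<bar>u a\<bar> \<le> P * (m * A) ^ length a * fact (length a) powr (C + 1) * w a"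
      using bu n by simp
    have bb: "\<bar>v b\<bar> \<le> Q * A ^ length b * fact (length b) powr (C + 1) * w b"
      using bv n by simp
    have "\<bar>u a * v b\<bar> = \<bar>u a\<bar> * \<bar>v b\<bar>" by (simp add: abs_mult)
    also have "\<dots> \<le> (P * (m * A) ^ length a * fact (length a) powr (C + 1) * w a) *
        (Q * A ^ length b * fact (length b) powr (C + 1) * w b)"
      by (rule mult_mono[OF ba bb]) (use ba in auto)
    also have "\<dots> = P * Q * m ^ length a * A ^ (length a + length b) *
        (fact (length a) powr (C + 1) * fact (length b) powr (C + 1)) * (w a * w b)"
      by (simp add: power_add power_mult_distrib algebra_simps)
    also have "\<dots> = P * Q * m ^ length a * A ^ length is *
        ((fact (length a) * fact (length b)) powr (C + 1)) * w is"
      using n wm[OF p] by (simp add: powr_mult a_def b_def)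
    also have "\<dots> \<le> P * Q * m ^ length a * A ^ length is * (fact (length is) powr (C + 1)) * w is"
    proof -
      have "(fact (length a) * fact (length b) :: real) powr (C + 1) \<le> fact (length is) powr (C + 1)"
        using fact_mult_le[of "length a" "length b"] n C by (intro powr_mono2) auto
      then show ?thesis using P Q m A w0[of "is"]
        by (intro mult_right_mono mult_left_mono) (auto intro!: mult_nonneg_nonneg)
    qed
    also have "\<dots> = m ^ length a * K" by (simp add: K_def)
    finally show ?thesis by (simp add: a_def b_def)
  qed
  have "\<bar>V\<bar> \<le> (\<Sum>p\<leftarrow>splits is. \<bar>u (fst p) * v (snd p)\<bar>)"
    unfolding eq using sum_list_abs[of "map (\<lambda>p. u (fst p) * v (snd p)) (splits is)"] by (simp add: o_def)
  also have "\<dots> \<le> (\<Sum>p\<leftarrow>splits is. m ^ length (fst p) * K)"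
    by (rule sum_list_mono) (rule trm)
  also have "\<dots> = (m + 1) ^ length is * K"
    by (simp add: sum_list_mult_const splits_sum)
  also have "\<dots> = P * Q * ((m + 1) * A) ^ length is * fact (length is) powr (C + 1) * w is"
    by (simp add: K_def power_mult_distrib mult.commute mult.left_commute)
  finally show ?thesis .
qed

lemma prod_main:
  fixes U :: "(real^'n::finite) set" and A C Bp :: real and r :: enat
    and f :: "nat \<Rightarrow> real^'n \<Rightarrow> real" and w :: "real^'n \<Rightarrow> 'n list \<Rightarrow> real"
  assumes U: "open U" and A: "A > 0" and C: "C \<ge> 0" and Bp: "Bp \<ge> 0"
    and wm: "\<And>x is p. x \<in> U \<Longrightarrow> p \<in> set (splits is) \<Longrightarrow> w x (fst p) * w x (snd p) = w x is"
    and w0: "\<And>x is. x \<in> U \<Longrightarrow> w x is \<ge> 0"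
    and hf: "\<And>j. j \<in> {1..Suc l} \<Longrightarrow> Cr_on r U (f j) \<and> (\<forall>x\<in>U. \<forall>is. enat (length is) \<le> r \<longrightarrow>
        \<bar>pds is (f j) x\<bar> \<le> Bp * A ^ length is * fact (length is) powr (C + 1) * w x is)"
  shows "Cr_on r U (\<lambda>x. \<Prod>j=1..Suc l. f j x) \<and> (\<forall>x\<in>U. \<forall>is. enat (length is) \<le> r \<longrightarrow>
        \<bar>pds is (\<lambda>x. \<Prod>j=1..Suc l. f j x) x\<bar> \<le> Bp ^ Suc l * (real (Suc l) * A) ^ length is * fact (length is) powr (C + 1) * w x is)"
  using hf
proof (induction l)
  case 0
  then show ?case by simp
next
  case (Suc l)
  define F where "F = (\<lambda>x. \<Prod>j=1..Suc l. f j x)"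
  define G where "G = f (Suc (Suc l))"
  have IH: "Cr_on r U F \<and> (\<forall>x\<in>U. \<forall>is. enat (length is) \<le> r \<longrightarrow>
        \<bar>pds is F x\<bar> \<le> Bp ^ Suc l * (real (Suc l) * A) ^ length is * fact (length is) powr (C + 1) * w x is)"
    unfolding F_def using Suc.IH Suc.prems by simp
  have hG: "Cr_on r U G \<and> (\<forall>x\<in>U. \<forall>is. enat (length is) \<le> r \<longrightarrow>
        \<bar>pds is G x\<bar> \<le> Bp * A ^ length is * fact (length is) powr (C + 1) * w x is)"
    unfolding G_def using Suc.prems[of "Suc (Suc l)"] by simp
  have fe: "(\<lambda>x. \<Prod>j=1..Suc (Suc l). f j x) = (\<lambda>x. F x * G x)"
    by (simp add: F_def G_def prod.cl_ivl_Suc)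
  have cr: "Cr_on r U (\<lambda>x. F x * G x)"
    using Cr_mult[OF U] IH hG by blast
  have bd: "\<bar>pds is (\<lambda>x. F x * G x) x\<bar> \<le> Bp ^ Suc (Suc l) * (real (Suc (Suc l)) * A) ^ length is * fact (length is) powr (C + 1) * w x is"
    if x: "x \<in> U" and len: "enat (length is) \<le> r" for x "is"
  proof -
    have dF: "\<And>js i y. length js < length is \<Longrightarrow> y \<in> U \<Longrightarrow> (\<lambda>t. pds js F (y + t *\<^sub>R axis i 1)) differentiable (at 0)"
    proof -
      fix js :: "'n list" and i y assume a: "length js < length is" "y \<in> U"
      have "enat (length js) < r" using a(1) len by (meson enat_ord_simps(2) order_less_le_trans)
      then show "(\<lambda>t. pds js F (y + t *\<^sub>R axis i 1)) differentiable (at 0)"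
        using IH a(2) unfolding Cr_on_def by (simp add: less_imp_le)
    qed
    have dG: "\<And>js i y. length js < length is \<Longrightarrow> y \<in> U \<Longrightarrow> (\<lambda>t. pds js G (y + t *\<^sub>R axis i 1)) differentiable (at 0)"
    proof -
      fix js :: "'n list" and i y assume a: "length js < length is" "y \<in> U"
      have "enat (length js) < r" using a(1) len by (meson enat_ord_simps(2) order_less_le_trans)
      then show "(\<lambda>t. pds js G (y + t *\<^sub>R axis i 1)) differentiable (at 0)"
        using hG a(2) unfolding Cr_on_def by (simp add: less_imp_le)
    qed
    have L: "pds is (\<lambda>x. F x * G x) x = (\<Sum>p\<leftarrow>splits is. pds (fst p) F x * pds (snd p) G x)"
      using leibniz[OF U dF dG] x by blast
    have lenr: "enat (length a) \<le> r" if "length a \<le> length is" for a :: "'n list"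
      using that len by (meson enat_ord_simps(1) order_trans)
    have "\<bar>pds is (\<lambda>x. F x * G x) x\<bar> \<le> Bp ^ Suc l * Bp * ((real (Suc l) + 1) * A) ^ length is * fact (length is) powr (C + 1) * w x is"
    proof (rule bound_step[OF L, where w = "w x"])
      show "\<bar>pds a F x\<bar> \<le> Bp ^ Suc l * (real (Suc l) * A) ^ length a * fact (length a) powr (C + 1) * w x a"
        if "length a \<le> length is" for a
        using IH x lenr[OF that] by blast
      show "\<bar>pds b G x\<bar> \<le> Bp * A ^ length b * fact (length b) powr (C + 1) * w x b"
        if "length b \<le> length is" for b
        using hG x lenr[OF that] by blast
    qed (use wm[OF x] w0[OF x] Bp A C in auto)
    then show ?thesis by (simp add: algebra_simps)
  qed
  show ?case unfolding fe using cr bd by blast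
qed

theorem mainTheorem7:
  fixes U :: "(real^'n::finite) set" and A B C :: real and r :: enat and l :: nat
    and f :: "nat \<Rightarrow> real^'n \<Rightarrow> real"
  assumes "open U" and "\<forall>x\<in>U. \<forall>i. 0 < x $ i \<and> x $ i < 1"
    and "A > 0" and "B > 0" and "C \<ge> 0" and "r \<ge> 1" and "l \<ge> 1"
  shows "((\<forall>j\<in>{1..l}. mild A B C r U (f j)) \<longrightarrow>
            mild (real l * A) (B ^ l) C r U (\<lambda>x. \<Prod>j=1..l. f j x))
       \<and> ((\<forall>j\<in>{1..l}. weakly_mild A B C r U (f j)) \<longrightarrow>
            weakly_mild (real l * A) (B ^ l) C r U (\<lambda>x. \<Prod>j=1..l. f j x))"
proof -
  obtain k where lk: "l = Suc k" using assms(7) by (cases l) auto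
  define Bp where "Bp = B powr (C + 1)"
  have Bp0: "Bp \<ge> 0" by (simp add: Bp_def)
  have Bl: "(B ^ l) powr (C + 1) = Bp ^ l"
    using assms(4) by (simp add: Bp_def powr_power powr_realpow[symmetric] powr_powr mult.commute)
  have part1: "(\<forall>j\<in>{1..l}. mild A B C r U (f j)) \<longrightarrow>
            mild (real l * A) (B ^ l) C r U (\<lambda>x. \<Prod>j=1..l. f j x)"
  proof
    assume h: "\<forall>j\<in>{1..l}. mild A B C r U (f j)"
    have "Cr_on r U (\<lambda>x. \<Prod>j=1..Suc k. f j x) \<and> (\<forall>x\<in>U. \<forall>is. enat (length is) \<le> r \<longrightarrow>
        \<bar>pds is (\<lambda>x. \<Prod>j=1..Suc k. f j x) x\<bar> \<le> Bp ^ Suc k * (real (Suc k) * A) ^ length is * fact (length is) powr (C + 1) * (\<lambda>_ _. 1::real) x is)"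
      by (rule prod_main[OF assms(1,3,5) Bp0]) (use h lk in \<open>auto simp: mild_def Bp_def\<close>)
    then show "mild (real l * A) (B ^ l) C r U (\<lambda>x. \<Prod>j=1..l. f j x)"
      unfolding mild_def Bl using lk by simp
  qed
  define w where "w = (\<lambda>(x::real^'n) is. 1 / (\<Prod>i\<in>UNIV. (x $ i) ^ count_list is i))"
  have w0: "w x is \<ge> 0" if "x \<in> U" for x "is"
  proof -
    have "0 < (\<Prod>i\<in>UNIV. (x $ i) ^ count_list is i)"
      using assms(2) that by (intro prod_pos zero_less_power) auto
    then show ?thesis unfolding w_def by simp
  qed
  have wm: "w x (fst p) * w x (snd p) = w x is" if "x \<in> U" "p \<in> set (splits is)" for x "is" p
  proof -
    have "(\<Prod>i\<in>UNIV. (x $ i) ^ count_list (fst p) i) * (\<Prod>i\<in>UNIV. (x $ i) ^ count_list (snd p) i)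
        = (\<Prod>i\<in>UNIV. (x $ i) ^ count_list is i)"
      by (simp add: prod.distrib[symmetric] power_add[symmetric] splits_count[OF that(2)])
    then show ?thesis unfolding w_def by simp
  qed
  have part2: "(\<forall>j\<in>{1..l}. weakly_mild A B C r U (f j)) \<longrightarrow>
            weakly_mild (real l * A) (B ^ l) C r U (\<lambda>x. \<Prod>j=1..l. f j x)"
  proof
    assume h: "\<forall>j\<in>{1..l}. weakly_mild A B C r U (f j)"
    have "Cr_on r U (\<lambda>x. \<Prod>j=1..Suc k. f j x) \<and> (\<forall>x\<in>U. \<forall>is. enat (length is) \<le> r \<longrightarrow>
        \<bar>pds is (\<lambda>x. \<Prod>j=1..Suc k. f j x) x\<bar> \<le> Bp ^ Suc k * (real (Suc k) * A) ^ length is * fact (length is) powr (C + 1) * w x is)"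
      by (rule prod_main[OF assms(1,3,5) Bp0, where w = w]) (use h lk wm w0 in \<open>auto simp: weakly_mild_def Bp_def w_def\<close>)
    then show "weakly_mild (real l * A) (B ^ l) C r U (\<lambda>x. \<Prod>j=1..l. f j x)"
      unfolding weakly_mild_def Bl using lk by (simp add: w_def)
  qed
  show ?thesis using part1 part2 by blast
qed

end
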